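(* Fix $\theta\in(0,1)$ and an integer $N\ge 1$ with $N \le \frac{1}{4\theta(1-\theta)}-1$. Then there exists a temperature $\tilde\tau>0$ (depending on $N$ and $\theta$) such that $$\mathrm{MSE}\big(\hat\nabla^{\mathsf{grad}}_{\tilde\tau,N}\big) < \mathrm{MSE}\big(\hat\nabla^{\mathsf{RF}}_{N}\big).$$ Moreover, for every fixed $N\ge1$ and $\theta=1/k$ with $k\to\infty$, one has $\mathrm{MSE}(\hat\nabla^{\mathsf{RF}}_{N})=\Omega(k)$, while for each such $\theta$ there is $\tilde\tau>0$ with $\mathrm{MSE}(\hat\nabla^{\mathsf{grad}}_{\tilde\tau,N})<4$. The same holds for $\theta=1-1/k$, $k\to\infty$.
   Context: Binary action setting: actions $A\in\{-1,1\}$ are drawn from the policy $\pi_\theta$ with $\pi_\theta(-1)=\theta$, $\pi_\theta(1)=1-\theta$, for a parameter $\theta\in(0,1)$. Let $G(a)=a$ and $H(\theta)=\mathbb{E}_{A\sim\pi_\theta}[G(A)]$, so the true gradient is $\nabla_\theta H(\theta)=\frac{d}{d\theta}H(\theta)$. REINFORCE estimator: given $N$ i.i.d. samples $A_1,\dots,A_N\sim\pi_\theta$, $\hat\nabla^{\mathsf{RF}}_N=\frac1N\sum_{i=1}^N G(A_i)\,\nabla_\theta\log\pi_\theta(A_i)$. Smoothed pathwise estimator: for temperature $\tau>0$ and $U\sim\mathrm{Uniform}[0,1]$ let $h_\tau(U,\theta)=\frac{\exp((U-\theta)/\tau)-1}{\exp((U-\theta)/\tau)+1}$ (a smoothing of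 $2\mathbf{1}\{U>\theta\}-1$, which has the law of $A$). Given $N$ i.i.d. $U_1,\dots,U_N\sim\mathrm{Uniform}[0,1]$, $\hat\nabla^{\mathsf{grad}}_{\tau,N}=\frac1N\sum_{i=1}^N \nabla_\theta G(h_\tau(U_i,\theta))=\frac1N\sum_{i=1}^N \frac{\partial}{\partial\theta}h_\tau(U_i,\theta)$. For an estimator $\hat\nabla$, $\mathrm{MSE}(\hat\nabla)=\mathbb{E}\big[(\hat\nabla-\nabla_\theta H(\theta))^2\big]$. *)

theory Defs
  imports "HOL-Probability.Probability" "HOL-Library.Landau_Symbols"
begin

definition policy :: "real \<Rightarrow> real pmf" where
  "policy \<theta> = map_pmf (\<lambda>b. if b then -1 else 1) (bernoulli_pmf \<theta>)"

definition G :: "real \<Rightarrow> real" where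
  "G a = a"

definition H :: "real \<Rightarrow> real" where
  "H \<theta> = measure_pmf.expectation (policy \<theta>) G"

definition true_grad :: "real \<Rightarrow> real" where
  "true_grad \<theta> = deriv H \<theta>"

definition score :: "real \<Rightarrow> real \<Rightarrow> real" where
  "score \<theta> a = deriv (\<lambda>t. ln (pmf (policy t) a)) \<theta>"

definition rf_est :: "nat \<Rightarrow> real \<Rightarrow> (nat \<Rightarrow> real) \<Rightarrow> real" where
  "rf_est N \<theta> A = (1 / real N) * (\<Sum>i<N. G (A i) * score \<theta> (A i))"

definition mse_rf :: "nat \<Rightarrow> real \<Rightarrow> real" where
  "mse_rf N \<theta> = measure_pmf.expectation (Pi_pmf {..<N} 0 (\<lambda>_. policy \<theta>))
      (\<lambda>A. (rf_est N \<theta> A - true_grad \<theta>)\<^sup>2)"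

definition h :: "real \<Rightarrow> real \<Rightarrow> real \<Rightarrow> real" where
  "h \<tau> u \<theta> = (exp ((u - \<theta>) / \<tau>) - 1) / (exp ((u - \<theta>) / \<tau>) + 1)"

definition grad_est :: "real \<Rightarrow> nat \<Rightarrow> real \<Rightarrow> (nat \<Rightarrow> real) \<Rightarrow> real" where
  "grad_est \<tau> N \<theta> U = (1 / real N) * (\<Sum>i<N. deriv (\<lambda>t. G (h \<tau> (U i) t)) \<theta>)"

definition mse_grad :: "real \<Rightarrow> nat \<Rightarrow> real \<Rightarrow> real" where
  "mse_grad \<tau> N \<theta> = integral\<^sup>L (PiM {..<N} (\<lambda>_. uniform_measure lborel {0..1::real}))
      (\<lambda>U. (grad_est \<tau> N \<theta> U - true_grad \<theta>)\<^sup>2)"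

end

theory Submission imports Defs begin

lemma exp_pair:
  fixes g :: "'a \<times> 'b \<Rightarrow> real"
  assumes "finite (set_pmf p)" "finite (set_pmf q)"
  shows "measure_pmf.expectation (pair_pmf p q) g =
         measure_pmf.expectation p (\<lambda>a. measure_pmf.expectation q (\<lambda>b. g (a,b)))"
proof -
  have "measure_pmf.expectation (pair_pmf p q) g = (\<Sum>z\<in>set_pmf p \<times> set_pmf q. pmf (pair_pmf p q) z *\<^sub>R g z)"
    using assms by (intro integral_measure_pmf) auto
  also have "\<dots> = (\<Sum>a\<in>set_pmf p. \<Sum>b\<in>set_pmf q. pmf p a * (pmf q b * g (a,b)))"
    by (subst sum.cartesian_product) (auto simp: pmf_pair mult.assoc intro!: sum.cong)
  also have "\<dots> = (\<Sum>a\<in>set_pmf p. pmf p a *\<^sub>R measure_pmf.expectation q (\<lambda>b. g (a,b)))"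
    using assms by (simp add: integral_measure_pmf[of "set_pmf q"] sum_distrib_left)
  also have "\<dots> = measure_pmf.expectation p (\<lambda>a. measure_pmf.expectation q (\<lambda>b. g (a,b)))"
    using assms by (intro integral_measure_pmf[symmetric]) auto
  finally show ?thesis .
qed

lemma fin_Pi:
  assumes "finite (set_pmf p)" "finite I"
  shows "finite (set_pmf (Pi_pmf I d (\<lambda>_. p)))"
  by (rule finite_subset[OF set_Pi_pmf_subset'[OF assms(2)]]) (use assms in auto)

lemma key:
  fixes p :: "'a pmf" and Y :: "'a \<Rightarrow> real"
  assumes fp: "finite (set_pmf p)" and m0: "measure_pmf.expectation p Y = 0" and I: "finite I"
  shows "measure_pmf.expectation (Pi_pmf I d (\<lambda>_. p)) (\<lambda>A. \<Sum>i\<in>I. Y (A i)) = 0 \<and>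
         measure_pmf.expectation (Pi_pmf I d (\<lambda>_. p)) (\<lambda>A. (\<Sum>i\<in>I. Y (A i))\<^sup>2)
           = real (card I) * measure_pmf.expectation p (\<lambda>a. (Y a)\<^sup>2)"
  using I
proof (induction I rule: finite_induct)
  case empty
  then show ?case by simp
next
  case (insert x I)
  define Q where "Q = Pi_pmf I d (\<lambda>_. p)"
  define S where "S = (\<lambda>f. \<Sum>i\<in>I. Y (f i))"
  have fQ: "finite (set_pmf Q)" unfolding Q_def using fin_Pi[OF fp insert(1)] .
  have eq: "Pi_pmf (insert x I) d (\<lambda>_. p) = map_pmf (\<lambda>(y,f). f(x:=y)) (pair_pmf p Q)"
    unfolding Q_def using insert(1,2) by (rule Pi_pmf_insert)
  have sumeq: "(\<Sum>i\<in>insert x I. Y ((f(x:=y)) i)) = Y y + S f" for f y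
  proof -
    have "(\<Sum>i\<in>I. Y ((f(x:=y)) i)) = S f" unfolding S_def
      using insert(2) by (intro sum.cong) auto
    then show ?thesis using insert(1,2) by simp
  qed
  have IH1: "measure_pmf.expectation Q S = 0" and
       IH2: "measure_pmf.expectation Q (\<lambda>f. (S f)\<^sup>2) = real (card I) * measure_pmf.expectation p (\<lambda>a. (Y a)\<^sup>2)"
    using insert(3) unfolding Q_def S_def by auto
  have intQ: "integrable (measure_pmf Q) f" for f :: "_ \<Rightarrow> real"
    using fQ by (rule integrable_measure_pmf_finite)
  have intp: "integrable (measure_pmf p) f" for f :: "_ \<Rightarrow> real"
    using fp by (rule integrable_measure_pmf_finite)
  have E1: "measure_pmf.expectation (Pi_pmf (insert x I) d (\<lambda>_. p)) (\<lambda>A. \<Sum>i\<in>insert x I. Y (A i))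
      = measure_pmf.expectation p (\<lambda>y. measure_pmf.expectation Q (\<lambda>f. Y y + S f))"
  proof -
    have "measure_pmf.expectation (Pi_pmf (insert x I) d (\<lambda>_. p)) (\<lambda>A. \<Sum>i\<in>insert x I. Y (A i))
      = measure_pmf.expectation (pair_pmf p Q) (\<lambda>(y,f). Y y + S f)"
      unfolding eq integral_map_pmf by (intro arg_cong[where f="measure_pmf.expectation _"]) (auto simp del: fun_upd_apply simp: sumeq)
    then show ?thesis by (simp add: exp_pair[OF fp fQ])
  qed
  also have "\<dots> = measure_pmf.expectation p (\<lambda>y. Y y)"
    using IH1 by (simp add: Bochner_Integration.integral_add[OF intQ intQ])
  finally have 1: "measure_pmf.expectation (Pi_pmf (insert x I) d (\<lambda>_. p)) (\<lambda>A. \<Sum>i\<in>insert x I. Y (A i)) = 0"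
    using m0 by simp
  have "measure_pmf.expectation (Pi_pmf (insert x I) d (\<lambda>_. p)) (\<lambda>A. (\<Sum>i\<in>insert x I. Y (A i))\<^sup>2)
      = measure_pmf.expectation p (\<lambda>y. measure_pmf.expectation Q (\<lambda>f. (Y y)\<^sup>2 + 2 * Y y * S f + (S f)\<^sup>2))"
  proof -
    have "measure_pmf.expectation (Pi_pmf (insert x I) d (\<lambda>_. p)) (\<lambda>A. (\<Sum>i\<in>insert x I. Y (A i))\<^sup>2)
      = measure_pmf.expectation (pair_pmf p Q) (\<lambda>(y,f). (Y y)\<^sup>2 + 2 * Y y * S f + (S f)\<^sup>2)"
      unfolding eq integral_map_pmf by (intro arg_cong[where f="measure_pmf.expectation _"]) (auto simp del: fun_upd_apply simp: sumeq power2_sum)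
    then show ?thesis by (simp add: exp_pair[OF fp fQ])
  qed
  also have "\<dots> = measure_pmf.expectation p (\<lambda>y. (Y y)\<^sup>2 + real (card I) * measure_pmf.expectation p (\<lambda>a. (Y a)\<^sup>2))"
    using IH1 IH2 by (simp add: Bochner_Integration.integral_add[OF intQ intQ] Bochner_Integration.integral_mult_right[OF intQ])
  also have "\<dots> = real (card (insert x I)) * measure_pmf.expectation p (\<lambda>a. (Y a)\<^sup>2)"
    using insert(1,2) by (simp add: Bochner_Integration.integral_add[OF intp intp] algebra_simps)
  finally show ?case using 1 by simp
qed


lemma pmf_policy:
  assumes "0 \<le> t" "t \<le> 1"
  shows "pmf (policy t) a = (if a = -1 then t else if a = 1 then 1 - t else 0)"
proof -
  have "pmf (policy t) a = measure_pmf.prob (bernoulli_pmf t) ((\<lambda>b. if b then -1 else (1::real)) -` {a})"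
    unfolding policy_def by (rule pmf_map)
  moreover have "(\<lambda>b. if b then -1 else (1::real)) -` {a} = (if a = -1 then {True} else if a = 1 then {False} else {})"
    by (auto split: if_splits)
  ultimately show ?thesis using assms by (auto simp: measure_pmf_single)
qed

lemma set_policy: "set_pmf (policy t) \<subseteq> {-1, 1}"
  by (auto simp: policy_def)

lemma fin_policy: "finite (set_pmf (policy t))"
  using set_policy finite_subset by blast

lemma H_eq: "0 \<le> t \<Longrightarrow> t \<le> 1 \<Longrightarrow> H t = 1 - 2 * t"
  unfolding H_def policy_def G_def by simp

lemma true_grad_eq:
  assumes "0 < \<theta>" "\<theta> < 1"
  shows "true_grad \<theta> = -2"
proof -
  have "((\<lambda>t. 1 - 2 * t) has_real_derivative -2) (at \<theta>)"
    by (auto intro!: derivative_eq_intros)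
  then have "(H has_real_derivative -2) (at \<theta>)"
    by (rule has_field_derivative_transform_within_open[where S="{0<..<1}"])
       (use assms in \<open>auto simp: H_eq\<close>)
  then show ?thesis unfolding true_grad_def by (rule DERIV_imp_deriv)
qed

lemma score_eq:
  assumes "0 < \<theta>" "\<theta> < 1"
  shows "score \<theta> a = (if a = -1 then 1 / \<theta> else if a = 1 then - 1 / (1 - \<theta>) else 0)"
proof -
  define g where "g = (\<lambda>t::real. if a = -1 then ln t else if a = 1 then ln (1 - t) else 0)"
  have "(g has_real_derivative (if a = -1 then 1 / \<theta> else if a = 1 then - 1 / (1 - \<theta>) else 0)) (at \<theta>)"
    unfolding g_def using assms by (auto intro!: derivative_eq_intros)
  then have "((\<lambda>t. ln (pmf (policy t) a)) has_real_derivative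
      (if a = -1 then 1 / \<theta> else if a = 1 then - 1 / (1 - \<theta>) else 0)) (at \<theta>)"
    by (rule has_field_derivative_transform_within_open[where S="{0<..<1}"])
       (use assms in \<open>auto simp: g_def pmf_policy\<close>)
  then show ?thesis unfolding score_def by (rule DERIV_imp_deriv)
qed

lemma sq_aux: "(s::real) > 0 \<Longrightarrow> s * (2 - 1 / s)\<^sup>2 = 4 * s - 4 + 1 / s"
  by (simp add: power2_eq_square field_simps)

lemma mse_rf_eq:
  assumes "0 < \<theta>" "\<theta> < 1" "1 \<le> N"
  shows "mse_rf N \<theta> = (1 / (\<theta> * (1 - \<theta>)) - 4) / real N"
proof -
  define Y where "Y = (\<lambda>a. G a * score \<theta> a + 2)"
  have E: "measure_pmf.expectation (policy \<theta>) f = \<theta> * f (-1) + (1 - \<theta>) * f 1" for f :: "real \<Rightarrow> real"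
    using assms by (subst integral_measure_pmf_real[where A="{-1,1}"])
                   (use set_policy in \<open>auto simp: pmf_policy\<close>)
  have Y1: "Y (-1) = 2 - 1 / \<theta>" and Y2: "Y 1 = 2 - 1 / (1 - \<theta>)"
    using assms by (auto simp: Y_def G_def score_eq)
  have m0: "measure_pmf.expectation (policy \<theta>) Y = 0"
    using assms by (simp add: E Y1 Y2 field_simps)
  have v: "measure_pmf.expectation (policy \<theta>) (\<lambda>a. (Y a)\<^sup>2) = 1 / (\<theta> * (1 - \<theta>)) - 4"
  proof -
    have a: "\<theta> * (2 - 1 / \<theta>)\<^sup>2 = 4 * \<theta> - 4 + 1 / \<theta>"
      using assms by (intro sq_aux) simp
    have b: "(1 - \<theta>) * (2 - 1 / (1 - \<theta>))\<^sup>2 = 4 * (1 - \<theta>) - 4 + 1 / (1 - \<theta>)"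
      using assms by (intro sq_aux) simp
    have c: "1 / \<theta> + 1 / (1 - \<theta>) = 1 / (\<theta> * (1 - \<theta>))"
      using assms by (simp add: field_simps)
    show ?thesis by (simp add: E Y1 Y2 a b) (use c in simp)
  qed
  have k: "measure_pmf.expectation (Pi_pmf {..<N} 0 (\<lambda>_. policy \<theta>)) (\<lambda>A. (\<Sum>i\<in>{..<N}. Y (A i))\<^sup>2)
      = real N * (1 / (\<theta> * (1 - \<theta>)) - 4)"
    using key[OF fin_policy m0, of "{..<N}" 0] v by simp
  have pt: "(rf_est N \<theta> A - true_grad \<theta>)\<^sup>2 = (\<Sum>i\<in>{..<N}. Y (A i))\<^sup>2 / (real N)\<^sup>2" for A
  proof -
    have "rf_est N \<theta> A - true_grad \<theta> = (\<Sum>i\<in>{..<N}. Y (A i)) / real N"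
      using assms unfolding rf_est_def Y_def
      by (simp add: true_grad_eq sum.distrib field_simps)
    then show ?thesis by (simp add: power_divide)
  qed
  have "mse_rf N \<theta> = real N * (1 / (\<theta> * (1 - \<theta>)) - 4) / (real N)\<^sup>2"
    unfolding mse_rf_def pt by (simp add: k)
  also have "\<dots> = (1 / (\<theta> * (1 - \<theta>)) - 4) / real N"
    using assms by (simp add: power2_eq_square)
  finally show ?thesis .
qed


definition dd :: "real \<Rightarrow> real \<Rightarrow> real" where
  "dd \<theta> u = - 2 * exp (u - \<theta>) / (exp (u - \<theta>) + 1)\<^sup>2"

lemma deriv_h1: "deriv (\<lambda>t. G (h 1 u t)) \<theta> = dd \<theta> u"
proof -
  have "((\<lambda>t. G (h 1 u t)) has_real_derivative dd \<theta> u) (at \<theta>)"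
  proof -
    have pos: "exp (u - \<theta>) + 1 \<noteq> 0" using exp_gt_zero[of "u - \<theta>"] by linarith
    have "((\<lambda>t. (exp ((u - t) / 1) - 1) / (exp ((u - t) / 1) + 1)) has_real_derivative
       ((- exp (u - \<theta>)) * (exp (u - \<theta>) + 1) - (exp (u - \<theta>) - 1) * (- exp (u - \<theta>))) / (exp (u - \<theta>) + 1)\<^sup>2) (at \<theta>)"
      using pos by (auto intro!: derivative_eq_intros simp: power2_eq_square)
    moreover have "((- exp (u - \<theta>)) * (exp (u - \<theta>) + 1) - (exp (u - \<theta>) - 1) * (- exp (u - \<theta>))) / (exp (u - \<theta>) + 1)\<^sup>2 = dd \<theta> u"
      unfolding dd_def by (simp add: algebra_simps)
    ultimately show ?thesis unfolding G_def h_def by simp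
  qed
  then show ?thesis by (rule DERIV_imp_deriv)
qed

lemma dd_bounds: "- 1 / 2 \<le> dd \<theta> u \<and> dd \<theta> u < 0"
proof -
  define e where "e = exp (u - \<theta>)"
  have e: "e > 0" unfolding e_def by simp
  have q: "(e + 1)\<^sup>2 - 4 * e = (e - 1)\<^sup>2" by (simp add: power2_eq_square algebra_simps)
  have "4 * e \<le> (e + 1)\<^sup>2" using q zero_le_power2[of "e - 1"] by linarith
  then have "2 * e / (e + 1)\<^sup>2 \<le> 1 / 2" using e by (simp add: field_simps)
  moreover have "2 * e / (e + 1)\<^sup>2 > 0" using e by simp
  ultimately show ?thesis unfolding dd_def e_def[symmetric] by simp
qed

lemma mse_grad_lt4:
  assumes "0 < \<theta>" "\<theta> < 1" "1 \<le> N"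
  shows "mse_grad 1 N \<theta> < 4"
proof -
  define M where "M = PiM {..<N} (\<lambda>_. uniform_measure lborel {0..1::real})"
  have ps1: "prob_space (uniform_measure lborel {0..1::real})"
    by (intro prob_space_uniform_measure) auto
  interpret prob_space M unfolding M_def
    by (intro prob_space_PiM) (use ps1 in auto)
  define f where "f = (\<lambda>U::nat \<Rightarrow> real. ((\<Sum>i<N. dd \<theta> (U i)) / real N + 2)\<^sup>2)"
  have feq: "(\<lambda>U. (grad_est 1 N \<theta> U - true_grad \<theta>)\<^sup>2) = f"
    unfolding f_def grad_est_def deriv_h1 true_grad_eq[OF assms(1,2)] by (simp add: field_simps)
  have cont: "continuous_on UNIV (dd \<theta>)" unfolding dd_def
  proof (intro continuous_intros ballI)
    fix u :: real
    have "exp (u - \<theta>) + 1 > 0" using exp_gt_zero[of "u - \<theta>"] by linarith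
    then show "(exp (u - \<theta>) + 1)\<^sup>2 \<noteq> 0" by simp
  qed
  have dm: "dd \<theta> \<in> borel_measurable borel" using cont by (rule borel_measurable_continuous_onI)
  have fm: "f \<in> borel_measurable M" unfolding f_def M_def
    using dm by measurable
  have bnd: "0 \<le> f U \<and> f U < 4" for U
  proof -
    have s1: "(\<Sum>i<N. dd \<theta> (U i)) \<ge> real N * (- 1 / 2)"
      using sum_mono[of "{..<N}" "\<lambda>_. - 1 / 2" "\<lambda>i. dd \<theta> (U i)"] dd_bounds by simp
    have s2: "(\<Sum>i<N. dd \<theta> (U i)) < 0"
      using sum_strict_mono[of "{..<N}" "\<lambda>i. dd \<theta> (U i)" "\<lambda>_. 0"] dd_bounds assms(3) by (auto simp: lessThan_empty_iff)
    have "(\<Sum>i<N. dd \<theta> (U i)) / real N \<ge> - 1 / 2" using s1 assms(3) by (simp add: field_simps)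
    moreover have "(\<Sum>i<N. dd \<theta> (U i)) / real N < 0" using s2 assms(3) by (simp add: divide_neg_pos)
    ultimately have "0 \<le> (\<Sum>i<N. dd \<theta> (U i)) / real N + 2" "(\<Sum>i<N. dd \<theta> (U i)) / real N + 2 < 2" by linarith+
    from power_strict_mono[OF this(2) this(1), of 2] this show ?thesis unfolding f_def by simp
  qed
  have intf: "integrable M f"
  proof (rule integrable_const_bound[where B=4])
    show "AE x in M. norm (f x) \<le> 4" using bnd by (intro AE_I2) (smt (verit) real_norm_def)
  qed (rule fm)
  have "integral\<^sup>L M f < integral\<^sup>L M (\<lambda>_. 4)"
    by (rule integral_less_AE_space) (use intf bnd emeasure_space_1 in auto)
  then show ?thesis unfolding mse_grad_def M_def[symmetric] feq by (simp add: prob_space)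
qed


lemma inv_prod_ge:
  assumes "0 < \<theta>" "\<theta> < 1" "\<theta> * (1 - \<theta>) = (real k - 1) / (real k)\<^sup>2" "k \<ge> 2"
  shows "1 / (\<theta> * (1 - \<theta>)) \<ge> real k + 1"
proof -
  have "1 / (\<theta> * (1 - \<theta>)) = (real k)\<^sup>2 / (real k - 1)" using assms(3,4) by simp
  also have "\<dots> \<ge> real k + 1"
  proof -
    have "(real k + 1) * (real k - 1) \<le> (real k)\<^sup>2" by (simp add: power2_eq_square algebra_simps)
    then show ?thesis using assms(4) by (simp add: field_simps)
  qed
  finally show ?thesis .
qed

lemma mse_rf_lb:
  assumes "0 < \<theta>" "\<theta> < 1" "\<theta> * (1 - \<theta>) = (real k - 1) / (real k)\<^sup>2" "k \<ge> 2" "1 \<le> N"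
  shows "mse_rf N \<theta> \<ge> (real k - 3) / real N"
  using mse_rf_eq[OF assms(1,2,5)] inv_prod_ge[OF assms(1-4)] assms(5)
  by (simp add: divide_right_mono)

lemma omega_part:
  assumes N: "1 \<le> N" and th: "\<And>k. k \<ge> 2 \<Longrightarrow> 0 < t k \<and> t k < 1 \<and> t k * (1 - t k) = (real k - 1) / (real k)\<^sup>2"
  shows "(\<lambda>k::nat. mse_rf N (t k)) \<in> \<Omega>(\<lambda>k. real k)"
proof -
  have "(\<lambda>k. real k) \<in> O(\<lambda>k::nat. mse_rf N (t k))"
  proof (rule bigoI[where c="2 * real N"])
    show "\<forall>\<^sub>F k in at_top. norm (real k) \<le> 2 * real N * norm (mse_rf N (t k))"
      using eventually_ge_at_top[of "6::nat"]
    proof eventually_elim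
      case (elim k)
      then have lb: "mse_rf N (t k) \<ge> (real k - 3) / real N"
        using th[of k] by (intro mse_rf_lb) (use N in auto)
      have "real k \<le> 2 * real N * ((real k - 3) / real N)" using elim N by (simp add: field_simps)
      also have "\<dots> \<le> 2 * real N * mse_rf N (t k)" using lb by (intro mult_left_mono) auto
      moreover have "0 \<le> (real k - 3) / real N" using elim by simp
      ultimately show ?case using lb by simp
    qed
  qed
  then show ?thesis by (simp add: bigomega_iff_bigo)
qed

theorem theorem1:
  shows "(\<forall>(\<theta>::real) (N::nat). 0 < \<theta> \<and> \<theta> < 1 \<and> 1 \<le> N \<and>
            real N \<le> 1 / (4 * \<theta> * (1 - \<theta>)) - 1 \<longrightarrow>
            (\<exists>\<tau>>0. mse_grad \<tau> N \<theta> < mse_rf N \<theta>))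
       \<and> (\<forall>N::nat. 1 \<le> N \<longrightarrow>
            (\<lambda>k::nat. mse_rf N (1 / real k)) \<in> \<Omega>(\<lambda>k. real k)
          \<and> (\<forall>k::nat. 2 \<le> k \<longrightarrow> (\<exists>\<tau>>0. mse_grad \<tau> N (1 / real k) < 4))
          \<and> (\<lambda>k::nat. mse_rf N (1 - 1 / real k)) \<in> \<Omega>(\<lambda>k. real k)
          \<and> (\<forall>k::nat. 2 \<le> k \<longrightarrow> (\<exists>\<tau>>0. mse_grad \<tau> N (1 - 1 / real k) < 4)))"
proof (rule conjI)
  show "\<forall>(\<theta>::real) (N::nat). 0 < \<theta> \<and> \<theta> < 1 \<and> 1 \<le> N \<and>
            real N \<le> 1 / (4 * \<theta> * (1 - \<theta>)) - 1 \<longrightarrow>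
            (\<exists>\<tau>>0. mse_grad \<tau> N \<theta> < mse_rf N \<theta>)"
  proof (intro allI impI)
  fix \<theta> :: real and N :: nat
  assume a: "0 < \<theta> \<and> \<theta> < 1 \<and> 1 \<le> N \<and> real N \<le> 1 / (4 * \<theta> * (1 - \<theta>)) - 1"
  then have p: "0 < \<theta>" "\<theta> < 1" "1 \<le> N" by auto
  define X where "X = 1 / (4 * \<theta> * (1 - \<theta>))"
  have e: "1 / (\<theta> * (1 - \<theta>)) = 4 * X" unfolding X_def by simp
  have "real N \<le> X - 1" using a unfolding X_def by simp
  then have "1 / (\<theta> * (1 - \<theta>)) - 4 \<ge> 4 * real N" unfolding e by linarith
  then have "4 \<le> (1 / (\<theta> * (1 - \<theta>)) - 4) / real N" using p(3) by (simp add: le_divide_eq)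
  then have "mse_rf N \<theta> \<ge> 4" using mse_rf_eq[OF p] by simp
  then show "\<exists>\<tau>>0. mse_grad \<tau> N \<theta> < mse_rf N \<theta>"
    using mse_grad_lt4[OF p] by (intro exI[of _ 1]) auto
  qed
next
  show "\<forall>N::nat. 1 \<le> N \<longrightarrow>
            (\<lambda>k::nat. mse_rf N (1 / real k)) \<in> \<Omega>(\<lambda>k. real k)
          \<and> (\<forall>k::nat. 2 \<le> k \<longrightarrow> (\<exists>\<tau>>0. mse_grad \<tau> N (1 / real k) < 4))
          \<and> (\<lambda>k::nat. mse_rf N (1 - 1 / real k)) \<in> \<Omega>(\<lambda>k. real k)
          \<and> (\<forall>k::nat. 2 \<le> k \<longrightarrow> (\<exists>\<tau>>0. mse_grad \<tau> N (1 - 1 / real k) < 4))"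
  proof (intro allI impI)
  fix N :: nat assume N: "1 \<le> N"
  have t1: "0 < 1 / real k \<and> 1 / real k < 1 \<and> 1 / real k * (1 - 1 / real k) = (real k - 1) / (real k)\<^sup>2"
    if "k \<ge> 2" for k using that by (auto simp: field_simps power2_eq_square)
  have t2: "0 < 1 - 1 / real k \<and> 1 - 1 / real k < 1 \<and> (1 - 1 / real k) * (1 - (1 - 1 / real k)) = (real k - 1) / (real k)\<^sup>2"
    if "k \<ge> 2" for k using that by (auto simp: field_simps power2_eq_square)
  have h1: "(\<lambda>k::nat. mse_rf N (1 / real k)) \<in> \<Omega>(\<lambda>k. real k)" using omega_part[OF N t1] by simp
  have h2: "(\<lambda>k::nat. mse_rf N (1 - 1 / real k)) \<in> \<Omega>(\<lambda>k. real k)" using omega_part[OF N t2] by simp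
  have h3: "\<forall>k::nat. 2 \<le> k \<longrightarrow> (\<exists>\<tau>>0. mse_grad \<tau> N (1 / real k) < 4)"
    using t1 mse_grad_lt4 N by (intro allI impI exI[of _ 1]) auto
  have h4: "\<forall>k::nat. 2 \<le> k \<longrightarrow> (\<exists>\<tau>>0. mse_grad \<tau> N (1 - 1 / real k) < 4)"
    using t2 mse_grad_lt4 N by (intro allI impI exI[of _ 1]) auto
  show "(\<lambda>k::nat. mse_rf N (1 / real k)) \<in> \<Omega>(\<lambda>k. real k)
          \<and> (\<forall>k::nat. 2 \<le> k \<longrightarrow> (\<exists>\<tau>>0. mse_grad \<tau> N (1 / real k) < 4))
          \<and> (\<lambda>k::nat. mse_rf N (1 - 1 / real k)) \<in> \<Omega>(\<lambda>k. real k)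
          \<and> (\<forall>k::nat. 2 \<le> k \<longrightarrow> (\<exists>\<tau>>0. mse_grad \<tau> N (1 - 1 / real k) < 4))"
    using h1 h2 h3 h4 by blast
  qed
qed

end
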